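(* Consider the $(n,t_e,\lambda)$-full-access setting with $\lambda=\infty$ (Eve never switches the paths she accesses once chosen). Let $r=n-t_e$. For every integer $u>\log(2n-t_e)$ there is a one-round $(ur,\,un,\,0,\,0)$-PMT protocol over this setting; these protocols (indexed by $u$) form a P-PMT family with secrecy rate $R=1-\frac{t_e}{n}$.
   Context: Multipath setting: an $(n,t_a,t_b,t_e,\lambda)$-multipath setting ($0\le t_a,t_b,t_e\le n$) has a sender Alice, a receiver Bob and a passive, computationally unbounded eavesdropper Eve, connected by $n$ disjoint paths; Alice and Bob share no key. At any time Alice, Bob and Eve access at most $t_a,t_b,t_e$ paths respectively. Time is divided into intervals, each corresponding to sending $\lambda$ consecutive bits over a path; at the start of each interval every party (Eve included, adaptively) chooses its accessed paths and keeps them for the whole interval. Anything sent over a path is seen by all parties accessing that path in that interval; Eve's view is everything sent over her accessed paths. The case $t_a=t_b=n$ is called the $(n,t_e,\lambda)$-full-access setting. PMT protocol: a protocol is a $(k,c,\delta,\epsilon)$-PMT protocol if it transmits any message $S\in\{0,1\}^k$ from Alice to Bob using a total of $c$ communicated bits, with Bob outputting $\hat S$, such that $\Pr(\hat S\neq s)\le\delta$ for all $s\in\{0,1\}^k$ and $SD(View_E(s_1),View_E(s_2))\le\epsilon$ for all $s_1,s_2\in\{0,1\}^k$, where $View_E(s)$ is Eve's view when $s$ is sent (for any Eve strategy) and $SD(X,Y)=\frac12\sum_x|\Pr(X=x)-\Pr(Y=x)|$. Its secrecy rate is $k/c$. P-PMT family: a sequence $(\Pi_i)_{i\in\mathbb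 N}$ of $(k_i,c_i,0,0)$-PMT protocols with $k_{i+1}>k_i$; its P-secrecy rate is $\inf_i k_i/c_i$. Logarithms are base 2. *)

theory Defs
  imports "HOL-Probability.Probability"
begin

text \<open>Paths are numbered 0..n-1.  A transcript assigns to every path the bit
  string sent over it (paths with index at least n carry nothing).  Alice's
  (randomised) encoder maps a message to a distribution of transcripts; Bob's
  (possibly randomised) decoder sees all paths (t_b = n).\<close>

type_synonym transcript = "nat \<Rightarrow> bool list"
type_synonym protocol =
  "(bool list \<Rightarrow> transcript pmf) \<times> (transcript \<Rightarrow> bool list pmf)"

definition SD :: "'a pmf \<Rightarrow> 'a pmf \<Rightarrow> real" where
  "SD p q = (\<Sum>\<^sub>\<infinity>x. \<bar>pmf p x - pmf q x\<bar>) / 2"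

text \<open>Eve's view when she accesses the set E of paths for the whole (infinite)
  interval: everything sent on those paths.\<close>
definition eve_view :: "nat set \<Rightarrow> transcript \<Rightarrow> transcript" where
  "eve_view E x = (\<lambda>i. if i \<in> E then x i else [])"

definition one_round_PMT ::
  "nat \<Rightarrow> nat \<Rightarrow> nat \<Rightarrow> nat \<Rightarrow> real \<Rightarrow> real \<Rightarrow> protocol \<Rightarrow> bool" where
  "one_round_PMT n te k c \<delta> \<epsilon> P \<longleftrightarrow>
     (let enc = fst P; dec = snd P in
      \<comment> \<open>well-formed transcripts using exactly c communicated bits over the n paths\<close>
      (\<forall>s. length s = k \<longrightarrow> (\<forall>x \<in> set_pmf (enc s).
           (\<forall>i\<ge>n. x i = []) \<and> (\<Sum>i<n. length (x i)) = c)) \<and>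
      \<comment> \<open>reliability\<close>
      (\<forall>s. length s = k \<longrightarrow>
           measure_pmf.prob (bind_pmf (enc s) dec) {s'. s' \<noteq> s} \<le> \<delta>) \<and>
      \<comment> \<open>secrecy against every choice of at most t_e paths\<close>
      (\<forall>s1 s2 E. length s1 = k \<longrightarrow> length s2 = k \<longrightarrow> E \<subseteq> {..<n} \<longrightarrow> card E \<le> te \<longrightarrow>
           SD (map_pmf (eve_view E) (enc s1)) (map_pmf (eve_view E) (enc s2)) \<le> \<epsilon>))"

definition P_PMT_family ::
  "nat \<Rightarrow> nat \<Rightarrow> (nat \<Rightarrow> protocol) \<Rightarrow> (nat \<Rightarrow> nat) \<Rightarrow> (nat \<Rightarrow> nat) \<Rightarrow> bool" where
  "P_PMT_family n te Prot k c \<longleftrightarrow>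
     (\<forall>i. one_round_PMT n te (k i) (c i) 0 0 (Prot i)) \<and> (\<forall>i. k i < k (Suc i))"

definition P_secrecy_rate :: "(nat \<Rightarrow> nat) \<Rightarrow> (nat \<Rightarrow> nat) \<Rightarrow> real" where
  "P_secrecy_rate k c = (INF i. real (k i) / real (c i))"

end

theory Submission
  imports Defs "HOL-Algebra.Algebraic_Closure_Type" "HOL-Library.Z2"
begin

type_synonym K = "bit alg_closure"

lemma two_K: "(2::K) = 0"
proof -
  have "to_ac (1 + 1 :: bit) = (1 + 1 :: K)" by (simp only: to_ac_add to_ac_1)
  moreover have "(1 + 1 :: bit) = 0" by simp
  ultimately have "(1 + 1 :: K) = 0" by (metis to_ac_0)
  thus ?thesis by simp
qed

lemma neg_K: "- (x::K) = x"
proof -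
  have "x + x = 2 * x" by simp
  hence "x + x = 0" by (simp add: two_K)
  thus ?thesis by (simp add: add_eq_0_iff2 eq_neg_iff_add_eq_0)
qed

lemma frob: "((x::K) + y) ^ (2^u) = x^(2^u) + y^(2^u)"
proof (induction u)
  case (Suc u)
  have "(x+y)^(2^Suc u) = ((x+y)^(2^u))^2" by (simp add: power_mult[symmetric] mult.commute)
  also have "\<dots> = (x^(2^u) + y^(2^u))^2" using Suc by simp
  also have "\<dots> = (x^(2^u))^2 + (y^(2^u))^2" by (simp add: power2_sum two_K)
  also have "\<dots> = x^(2^Suc u) + y^(2^Suc u)" by (simp add: power_mult[symmetric] mult.commute)
  finally show ?case .
qed simp

lemma of_nat_pow2_K: "u > 0 \<Longrightarrow> (of_nat (2^u) :: K) = 0"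
  by (cases u) (simp_all add: two_K)

lemma card_F: assumes "u > 0" shows "card {x::K. x^(2^u) = x} = 2^u"
proof -
  define q :: nat where "q = 2^u"
  have q2: "q \<ge> 2" using assms unfolding q_def
    by (metis One_nat_def Suc_leI less_exp nat_power_less_imp_less power_one_right verit_comp_simplify1(3) zero_less_numeral) 
  define p :: "K poly" where "p = Polynomial.monom 1 q - [:0,1:]"
  have poly_p: "poly p x = x^q - x" for x by (simp add: p_def poly_monom)
  have cq: "Polynomial.coeff p q = 1" unfolding p_def using q2 by (simp add: coeff_monom coeff_pCons split: nat.split)
  have "Polynomial.degree p \<le> q" unfolding p_def using q2
    by (intro degree_diff_le) (auto simp: degree_monom_le)
  moreover have "Polynomial.degree p \<ge> q" using cq by (intro le_degree) simp
  ultimately have deg: "Polynomial.degree p = q" by simp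
  have p0: "p \<noteq> 0" using deg q2 by auto
  have lc: "Polynomial.lead_coeff p = 1" using cq deg by simp
  have dp: "pderiv p = -1" unfolding p_def using assms
    by (simp add: pderiv_diff pderiv_monom of_nat_pow2_K q_def pderiv_pCons two_K power_0_left one_pCons)
  obtain A where A: "size A = q" "p = (\<Prod>x\<in>#A. [:-x, 1:])"
    using alg_closed_imp_factorization[OF p0] lc deg by auto
  have roots: "{x. poly p x = 0} = set_mset A"
    using A(2) by (auto simp: poly_prod_mset prod_mset_zero_iff)
  have cnt: "count A a \<le> 1" for a
  proof (rule ccontr)
    assume "\<not> count A a \<le> 1"
    hence "a \<in># A" "a \<in># A - {#a#}" by (auto simp: in_diff_count not_less_eq_eq simp flip: count_greater_zero_iff)
    then obtain B where B: "A = add_mset a (add_mset a B)"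
      by (metis insert_DiffM)
    have "p = [:-a,1:] * ([:-a,1:] * (\<Prod>x\<in>#B. [:-x, 1:]))" using A(2) B by simp
    moreover have "poly (pderiv (h*(h*g))) a = 0" if "poly h a = 0" for h g :: "K poly"
      by (simp add: pderiv_mult that)
    moreover have "poly [:-a,1:] a = 0" by simp
    ultimately have "poly (pderiv p) a = 0" by metis
    with dp show False by simp
  qed
  have "A = mset_set (set_mset A)"
  proof (rule multiset_eqI)
    fix x show "count A x = count (mset_set (set_mset A)) x"
      using cnt[of x] by (cases "x \<in># A") (auto simp: count_mset_set not_in_iff simp flip: count_greater_zero_iff)
  qed
  hence "card (set_mset A) = size A" by (metis size_mset_set)
  thus ?thesis using roots A(1) unfolding poly_p q_def by simp
qed

definition Fq :: "nat \<Rightarrow> K set" where "Fq u = {x. x^(2^u) = x}"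

lemma Fq_0: "0 \<in> Fq u" by (simp add: Fq_def)
lemma Fq_add: "x \<in> Fq u \<Longrightarrow> y \<in> Fq u \<Longrightarrow> x + y \<in> Fq u"
  by (simp add: Fq_def frob)
lemma Fq_mult: "x \<in> Fq u \<Longrightarrow> y \<in> Fq u \<Longrightarrow> x * y \<in> Fq u"
  by (simp add: Fq_def power_mult_distrib)

fun ev :: "K list \<Rightarrow> K \<Rightarrow> K" where
  "ev [] a = 0"
| "ev (c # cs) a = c + a * ev cs a"

lemma ev_Poly: "ev cs a = poly (Poly cs) a"
  by (induction cs) auto

lemma ev_append: "ev (xs @ ys) a = ev xs a + a ^ length xs * ev ys a"
  by (induction xs) (auto simp: algebra_simps)

lemma ev_diff: "length xs = length ys \<Longrightarrow> ev xs a - ev ys a = ev (map2 (-) xs ys) a"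
  by (induction xs ys rule: list_induct2) (auto simp: algebra_simps)

lemma ev_closed: "set cs \<subseteq> Fq u \<Longrightarrow> a \<in> Fq u \<Longrightarrow> ev cs a \<in> Fq u"
  by (induction cs) (auto intro: Fq_add Fq_mult Fq_0)

lemma degree_Poly_less: "xs \<noteq> [] \<Longrightarrow> Polynomial.degree (Poly xs) < length xs"
proof (induction xs)
  case (Cons x xs)
  show ?case
  proof (cases "xs = []")
    case True thus ?thesis by simp
  next
    case False
    with Cons have "Polynomial.degree (Poly xs) < length xs" by simp
    thus ?thesis by (simp add: degree_pCons_le le_less_trans)
  qed
qed simp

lemma ev_zero:
  assumes "finite P" "card P \<ge> length cs" "\<forall>a\<in>P. ev cs a = 0"
  shows "\<exists>m. cs = replicate m 0"
proof (cases "Poly cs = 0")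
  case True thus ?thesis by (simp add: Poly_eq_0)
next
  case False
  hence ne: "cs \<noteq> []" by auto
  have "P \<subseteq> {x. poly (Poly cs) x = 0}" using assms(3) by (auto simp: ev_Poly)
  hence "card P \<le> card {x. poly (Poly cs) x = 0}"
    using False by (intro card_mono poly_roots_finite) auto
  also have "\<dots> \<le> Polynomial.degree (Poly cs)" using False by (rule card_poly_roots_bound)
  also have "\<dots> < length cs" using ne by (rule degree_Poly_less)
  finally show ?thesis using assms(2) by simp
qed

lemma ev_inj:
  assumes "finite P" "card P \<ge> length xs" "length xs = length ys" "\<forall>a\<in>P. ev xs a = ev ys a"
  shows "xs = ys"
proof -
  have "\<forall>a\<in>P. ev (map2 (-) xs ys) a = 0"
    using assms(4) ev_diff[OF assms(3)] by (metis right_minus_eq)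
  then obtain m where m: "map2 (-) xs ys = replicate m 0"
    using ev_zero[OF assms(1), of "map2 (-) xs ys"] assms(2,3) by auto
  show ?thesis
  proof (rule nth_equalityI)
    show "length xs = length ys" by fact
    fix i assume "i < length xs"
    hence "map2 (-) xs ys ! i = 0" using m assms(3)
      by (metis length_map length_replicate length_zip min.idem nth_replicate)
    thus "xs ! i = ys ! i" using \<open>i < length xs\<close> assms(3) by simp
  qed
qed

lemma concat_chunks:
  "concat (map (\<lambda>j. take u (drop (j*u) s)) [0..<m]) = take (m*u) s"
proof (induction m)
  case (Suc m)
  have "take (Suc m * u) s = take (m*u + u) s" by (simp add: algebra_simps)
  also have "\<dots> = take (m*u) s @ take u (drop (m*u) s)" by (rule take_add)
  finally show ?case using Suc by simp
qed simp

lemma SD_same: "SD p p = 0"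
  by (simp add: SD_def)


lemma main_exists:
  assumes n0: "0 < n" and te: "te \<le> n" and u0: "0 < u" and nq: "n \<le> 2^u"
  shows "\<exists>P. one_round_PMT n te (u*(n-te)) (u*n) 0 0 P"
proof -
  define F where "F = Fq u"
  define L where "L = {xs::bool list. length xs = u}"
  have cardF: "card F = 2^u" using card_F[OF u0] by (simp add: F_def Fq_def)
  have finF: "finite F" using cardF by (intro card_ge_0_finite) simp
  have LL: "L = {xs. set xs \<subseteq> (UNIV::bool set) \<and> length xs = u}" by (simp add: L_def)
  have cardL: "card L = 2^u"
    using card_lists_length_eq[of "UNIV::bool set" u] by (simp add: L_def)
  have finL: "finite L"
    using finite_lists_length_eq[of "UNIV::bool set" u] by (simp add: L_def)
  obtain \<phi> where phi: "bij_betw \<phi> F L" using finite_same_card_bij[OF finF finL] cardF cardL by auto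
  define \<psi> where "\<psi> = the_inv_into F \<phi>"
  have psi: "bij_betw \<psi> L F" unfolding \<psi>_def by (rule bij_betw_the_inv_into[OF phi])
  have psiphi: "\<psi> (\<phi> x) = x" if "x \<in> F" for x
    unfolding \<psi>_def using phi that by (simp add: bij_betw_imp_inj_on the_inv_into_f_f)
  have phipsi: "\<phi> (\<psi> y) = y" if "y \<in> L" for y
    unfolding \<psi>_def using phi that by (intro f_the_inv_into_f_bij_betw) auto
  have phiL: "\<phi> x \<in> L" if "x \<in> F" for x using phi that by (auto simp: bij_betw_def)
  have psiF: "\<psi> y \<in> F" if "y \<in> L" for y using psi that by (auto simp: bij_betw_def)
  have phi_inj: "inj_on \<phi> F" using phi by (simp add: bij_betw_imp_inj_on)
  obtain \<alpha> where alpha: "bij_betw \<alpha> {0..<card F} F" using ex_bij_betw_nat_finite[OF finF] by blast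
  have alphaF: "\<alpha> i \<in> F" if "i < n" for i
    using alpha that nq cardF by (auto simp: bij_betw_def)
  have alpha_inj: "inj_on \<alpha> {..<n}"
    using alpha nq cardF by (auto simp: bij_betw_def intro: inj_on_subset)
  define k where "k = u*(n-te)"
  define chunks where "chunks s = map (\<lambda>j. take u (drop (j*u) s)) [0..<n-te]" for s :: "bool list"
  define T where "T rs s = (\<lambda>i. if i < n then \<phi> (ev (rs @ map \<psi> (chunks s)) (\<alpha> i)) else [])"
    for rs s
  define R where "R = {rs. set rs \<subseteq> F \<and> length rs = te}"
  have finR: "finite R" unfolding R_def using finF by (rule finite_lists_length_eq)
  have Rne: "R \<noteq> {}"
  proof -
    have "replicate te 0 \<in> R" unfolding R_def F_def using Fq_0 by auto
    thus ?thesis by auto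
  qed
  have cardR: "card R = (2^u)^te" using card_lists_length_eq[OF finF, of te] cardF by (simp add: R_def)
  define enc where "enc s = map_pmf (\<lambda>rs. T rs s) (pmf_of_set R)" for s
  define D where "D x = concat (map \<phi> (drop te (THE cs. length cs = n \<and> (\<forall>i<n. ev cs (\<alpha> i) = \<psi> (x i)))))" for x
  define dec where "dec x = return_pmf (D x)" for x
  have set_enc: "set_pmf (enc s) = (\<lambda>rs. T rs s) ` R" for s
    unfolding enc_def using finR Rne by simp
  have chunksL: "set (chunks s) \<subseteq> L" if "length s = k" for s
  proof
    fix c assume "c \<in> set (chunks s)"
    then obtain j where j: "j < n - te" "c = take u (drop (j*u) s)" unfolding chunks_def by auto
    have "Suc j * u \<le> (n-te) * u" using j(1) by (intro mult_le_mono1) simp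
    hence "j*u + u \<le> length s" using that by (simp add: k_def algebra_simps)
    thus "c \<in> L" using j(2) by (simp add: L_def)
  qed
  have sigF: "set (map \<psi> (chunks s)) \<subseteq> F" if "length s = k" for s
    using chunksL[OF that] psiF by auto
  have lenchunks: "length (chunks s) = n - te" for s by (simp add: chunks_def)
  have valF: "ev (rs @ map \<psi> (chunks s)) (\<alpha> i) \<in> F" if "length s = k" "rs \<in> R" "i < n" for rs s i
    unfolding F_def using sigF[OF that(1)] that(2) alphaF[OF that(3)]
    by (intro ev_closed) (auto simp: R_def F_def)
  have card_img: "card (\<alpha> ` A) = card A" if "A \<subseteq> {..<n}" for A
    using that alpha_inj by (intro card_image) (auto intro: inj_on_subset)
  have decode: "D (T rs s) = s" if s: "length s = k" and rs: "rs \<in> R" for rs s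
  proof -
    define cs0 where "cs0 = rs @ map \<psi> (chunks s)"
    have len0: "length cs0 = n" using rs te by (simp add: cs0_def R_def lenchunks)
    have "(THE cs. length cs = n \<and> (\<forall>i<n. ev cs (\<alpha> i) = \<psi> (T rs s i))) = cs0"
    proof (rule the_equality)
      show "length cs0 = n \<and> (\<forall>i<n. ev cs0 (\<alpha> i) = \<psi> (T rs s i))"
        using len0 valF[OF s rs] psiphi by (simp add: T_def cs0_def)
    next
      fix cs assume cs: "length cs = n \<and> (\<forall>i<n. ev cs (\<alpha> i) = \<psi> (T rs s i))"
      show "cs = cs0"
      proof (rule ev_inj[of "\<alpha> ` {..<n}"])
        show "finite (\<alpha> ` {..<n})" by simp
        show "length cs \<le> card (\<alpha> ` {..<n})" using cs card_img[of "{..<n}"] by simp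
        show "length cs = length cs0" using cs len0 by simp
        show "\<forall>a\<in>\<alpha> ` {..<n}. ev cs a = ev cs0 a"
          using cs valF[OF s rs] psiphi by (auto simp: T_def cs0_def)
      qed
    qed
    hence "D (T rs s) = concat (map \<phi> (map \<psi> (chunks s)))"
      using rs by (simp add: D_def cs0_def R_def)
    also have "map \<phi> (map \<psi> (chunks s)) = chunks s"
      using chunksL[OF s] phipsi by (induction "chunks s") (auto simp: map_idI subset_iff)
    also have "concat (chunks s) = take ((n-te)*u) s"
      unfolding chunks_def by (rule concat_chunks)
    also have "\<dots> = s" using s by (simp add: k_def mult.commute)
    finally show ?thesis .
  qed
  define B where "B E' = PiE_dflt E' [] (\<lambda>_. L)" for E' :: "nat set"
  have view: "map_pmf (eve_view E') (enc s) = pmf_of_set (B E')"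
    if s: "length s = k" and E': "E' \<subseteq> {..<n}" "card E' = te" for s E'
  proof -
    define g where "g rs = eve_view E' (T rs s)" for rs
    have finE': "finite E'" using E' finite_subset by blast
    have inj: "inj_on g R"
    proof
      fix rs rs' assume rs: "rs \<in> R" and rs': "rs' \<in> R" and eq: "g rs = g rs'"
      have "ev rs a = ev rs' a" if a: "a \<in> \<alpha> ` E'" for a
      proof -
        obtain i where i: "i \<in> E'" "a = \<alpha> i" using a by auto
        have iN: "i < n" using i E' by auto
        have "T rs s i = T rs' s i" using fun_cong[OF eq, of i] i by (simp add: g_def eve_view_def)
        hence "\<phi> (ev (rs @ map \<psi> (chunks s)) (\<alpha> i)) = \<phi> (ev (rs' @ map \<psi> (chunks s)) (\<alpha> i))"
          using iN by (simp add: T_def)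
        hence "ev (rs @ map \<psi> (chunks s)) (\<alpha> i) = ev (rs' @ map \<psi> (chunks s)) (\<alpha> i)"
          using valF[OF s rs iN] valF[OF s rs' iN] phi_inj by (meson inj_on_def)
        thus ?thesis using rs rs' i by (simp add: ev_append R_def)
      qed
      thus "rs = rs'"
        using rs rs' card_img[OF E'(1)] E' finE'
        by (intro ev_inj[of "\<alpha> ` E'"]) (auto simp: R_def)
    qed
    have sub: "g ` R \<subseteq> B E'"
    proof
      fix y assume "y \<in> g ` R"
      then obtain rs where rs: "rs \<in> R" "y = g rs" by auto
      show "y \<in> B E'" unfolding B_def PiE_dflt_def
        using rs E' valF[OF s rs(1)] phiL by (auto simp: g_def eve_view_def T_def)
    qed
    have cardB: "card (B E') = (2^u)^te"
      unfolding B_def using finE' finL cardL E'(2) by (subst card_PiE_dflt) auto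
    have finB: "finite (B E')" using cardB by (intro card_ge_0_finite) simp
    have "g ` R = B E'"
      using finB sub by (rule card_subset_eq) (simp add: card_image[OF inj] cardR cardB)
    have "map_pmf (eve_view E') (enc s) = map_pmf g (pmf_of_set R)"
      by (simp add: enc_def map_pmf_comp g_def[abs_def])
    also have "\<dots> = pmf_of_set (g ` R)" using inj Rne finR by (rule map_pmf_of_set_inj)
    finally show ?thesis using \<open>g ` R = B E'\<close> by simp
  qed
  have secr: "map_pmf (eve_view E) (enc s1) = map_pmf (eve_view E) (enc s2)"
    if "length s1 = k" "length s2 = k" "E \<subseteq> {..<n}" "card E \<le> te" for s1 s2 E
  proof -
    have finE: "finite E" using that(3) finite_subset by blast
    have "te - card E \<le> card ({..<n} - E)"
      using that(3,4) te finE by (simp add: card_Diff_subset)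
    then obtain Y0 where Y0: "Y0 \<subseteq> {..<n} - E" "card Y0 = te - card E" "finite Y0"
      by (rule obtain_subset_with_card_n)
    define E' where "E' = E \<union> Y0"
    have E'1: "E' \<subseteq> {..<n}" using Y0 that(3) by (auto simp: E'_def)
    have E'2: "card E' = te" unfolding E'_def using Y0 finE that(4)
      by (subst card_Un_disjoint) auto
    have comp: "(\<lambda>x. eve_view E (eve_view E' x)) = eve_view E"
      by (auto simp: eve_view_def E'_def fun_eq_iff)
    have "map_pmf (eve_view E) (enc s) = map_pmf (eve_view E) (pmf_of_set (B E'))"
      if "length s = k" for s
    proof -
      have "map_pmf (eve_view E) (enc s) = map_pmf (eve_view E) (map_pmf (eve_view E') (enc s))"
        by (simp add: map_pmf_comp comp)
      thus ?thesis using view[OF that E'1 E'2] by simp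
    qed
    thus ?thesis using that by simp
  qed
  have wf: "\<forall>s. length s = k \<longrightarrow> (\<forall>x \<in> set_pmf (enc s).
           (\<forall>i\<ge>n. x i = []) \<and> (\<Sum>i<n. length (x i)) = u*n)"
  proof (intro allI impI ballI)
    fix s x assume s: "length s = k" and x: "x \<in> set_pmf (enc s)"
    then obtain rs where rs: "rs \<in> R" "x = T rs s" using set_enc by auto
    have "(\<Sum>i<n. length (x i)) = (\<Sum>i<n. u)"
      using rs valF[OF s rs(1)] phiL by (intro sum.cong) (auto simp: T_def L_def)
    thus "(\<forall>i\<ge>n. x i = []) \<and> (\<Sum>i<n. length (x i)) = u * n" using rs by (simp add: T_def)
  qed
  have rel: "\<forall>s. length s = k \<longrightarrow>
           measure_pmf.prob (bind_pmf (enc s) dec) {s'. s' \<noteq> s} \<le> 0"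
  proof (intro allI impI)
    fix s :: "bool list" assume s: "length s = k"
    have "bind_pmf (enc s) dec = bind_pmf (pmf_of_set R) (\<lambda>rs. dec (T rs s))"
      by (simp add: enc_def bind_map_pmf)
    also have "\<dots> = bind_pmf (pmf_of_set R) (\<lambda>rs. return_pmf s)"
      using finR Rne decode[OF s] by (intro bind_pmf_cong) (auto simp: dec_def)
    also have "\<dots> = return_pmf s" by simp
    finally show "measure_pmf.prob (bind_pmf (enc s) dec) {s'. s' \<noteq> s} \<le> 0" by simp
  qed
  have sec: "\<forall>s1 s2 E. length s1 = k \<longrightarrow> length s2 = k \<longrightarrow> E \<subseteq> {..<n} \<longrightarrow> card E \<le> te \<longrightarrow>
           SD (map_pmf (eve_view E) (enc s1)) (map_pmf (eve_view E) (enc s2)) \<le> 0"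
  proof (intro allI impI)
    fix s1 s2 :: "bool list" and E :: "nat set"
    assume a: "length s1 = k" "length s2 = k" "E \<subseteq> {..<n}" "card E \<le> te"
    have "map_pmf (eve_view E) (enc s1) = map_pmf (eve_view E) (enc s2)" by (rule secr[OF a])
    thus "SD (map_pmf (eve_view E) (enc s1)) (map_pmf (eve_view E) (enc s2)) \<le> 0"
      by (simp only: SD_same)
  qed
  have "one_round_PMT n te k (u*n) 0 0 (enc, dec)"
    unfolding one_round_PMT_def Let_def fst_conv snd_conv by (intro conjI wf rel sec)
  thus ?thesis unfolding k_def by blast
qed

lemma u_cond:
  fixes n te u :: nat
  assumes "0 < n" "te \<le> n" "real u > log 2 (real (2 * n - te))"
  shows "0 < u" "n \<le> 2^u"
proof -
  have pos: "real (2 * n - te) > 0" using assms(1,2) by simp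
  have ge1: "real (2 * n - te) \<ge> 1" using assms(1,2) by simp
  have "0 \<le> log 2 (real (2 * n - te))" using ge1 pos by simp
  thus "0 < u" using assms(3) by linarith
  have "real (2 * n - te) < 2 powr real u" using assms(3) pos by (simp add: log_less_iff)
  hence "real (2 * n - te) < 2 ^ u" by (simp add: powr_realpow)
  hence "2 * n - te < 2 ^ u" by (metis of_nat_less_iff of_nat_numeral of_nat_power)
  thus "n \<le> 2^u" using assms(2) by linarith
qed

theorem theorem1:
  fixes n te :: nat
  assumes "0 < n" and "te \<le> n"
  shows "\<exists>Prot :: nat \<Rightarrow> protocol.
     (\<forall>u::nat. real u > log 2 (real (2 * n - te)) \<longrightarrow>
        one_round_PMT n te (u * (n - te)) (u * n) 0 0 (Prot u)) \<and>
     (te < n \<longrightarrow>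
        (let u0 = (LEAST u::nat. real u > log 2 (real (2 * n - te))) in
           P_PMT_family n te (\<lambda>i. Prot (u0 + i))
             (\<lambda>i. (u0 + i) * (n - te)) (\<lambda>i. (u0 + i) * n) \<and>
           P_secrecy_rate (\<lambda>i. (u0 + i) * (n - te)) (\<lambda>i. (u0 + i) * n)
             = 1 - real te / real n))"
proof -
  define Prot where "Prot u = (SOME P. one_round_PMT n te (u * (n - te)) (u * n) 0 0 P)" for u
  have ok: "one_round_PMT n te (u * (n - te)) (u * n) 0 0 (Prot u)"
    if "real u > log 2 (real (2 * n - te))" for u
  proof -
    have "\<exists>P. one_round_PMT n te (u * (n - te)) (u * n) 0 0 P"
      using main_exists[OF assms u_cond[OF assms that]] .
    thus ?thesis unfolding Prot_def by (rule someI_ex)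
  qed
  have part2: "let u0 = (LEAST u::nat. real u > log 2 (real (2 * n - te))) in
           P_PMT_family n te (\<lambda>i. Prot (u0 + i))
             (\<lambda>i. (u0 + i) * (n - te)) (\<lambda>i. (u0 + i) * n) \<and>
           P_secrecy_rate (\<lambda>i. (u0 + i) * (n - te)) (\<lambda>i. (u0 + i) * n)
             = 1 - real te / real n" if lt: "te < n"
  proof -
    define u0 where "u0 = (LEAST u::nat. real u > log 2 (real (2 * n - te)))"
    obtain u1 :: nat where "log 2 (real (2 * n - te)) < real u1" using reals_Archimedean2 by blast
    hence hu0: "real u0 > log 2 (real (2 * n - te))" unfolding u0_def by (rule LeastI)
    have hui: "real (u0 + i) > log 2 (real (2 * n - te))" for i using hu0 by simp
    have u0pos: "0 < u0" using u_cond[OF assms hu0] by simp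
    have fam: "P_PMT_family n te (\<lambda>i. Prot (u0 + i))
             (\<lambda>i. (u0 + i) * (n - te)) (\<lambda>i. (u0 + i) * n)"
      unfolding P_PMT_family_def using ok[OF hui] lt by auto
    have eq: "(\<lambda>i. real ((u0 + i) * (n - te)) / real ((u0 + i) * n)) = (\<lambda>i. 1 - real te / real n)"
    proof
      fix i
      have "real ((u0 + i) * (n - te)) / real ((u0 + i) * n) = real (n - te) / real n"
      proof -
        have "real (u0 + i) \<noteq> 0" using u0pos by simp
        hence "real (u0 + i) * real (n - te) / (real (u0 + i) * real n) = real (n - te) / real n"
          by (rule mult_divide_mult_cancel_left)
        thus ?thesis by (simp only: of_nat_mult)
      qed
      also have "\<dots> = 1 - real te / real n" using assms by (simp add: of_nat_diff field_simps)
      finally show "real ((u0 + i) * (n - te)) / real ((u0 + i) * n) = 1 - real te / real n" .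
    qed
    have "P_secrecy_rate (\<lambda>i. (u0 + i) * (n - te)) (\<lambda>i. (u0 + i) * n) = 1 - real te / real n"
      unfolding P_secrecy_rate_def eq by simp
    thus ?thesis using fam unfolding u0_def Let_def by simp
  qed
  show ?thesis using ok part2 by blast
qed

end
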